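(* Let $\Gamma$ be a numerical semigroup, let $e'\in\Gamma\setminus\{0\}$ and $\Gamma_{e'}=\{0\}\cup(e'+\Gamma)$. For any $m\in\Gamma$, \[ \mathrm{Ap}(\Gamma_{e'},e'+m)=(e'+\mathrm{Ap}(\Gamma,m))\cup\big(e'+m+(\mathrm{Ap}(\Gamma,e')\setminus\{0\})\big)\cup\{0\}. \]
   Context: A numerical semigroup is a subset of $\mathbb N$ containing $0$, closed under addition, with finite complement. For a numerical semigroup $S$ and $x\in\mathbb Z$, $\mathrm{Ap}(S,x)=\{s\in S: s-x\notin S\}$. *)

theory Defs
  imports Main
begin

definition numerical_semigroup :: "nat set \<Rightarrow> bool" where
  "numerical_semigroup S \<longleftrightarrow> 0 \<in> S \<and> (\<forall>a\<in>S. \<forall>b\<in>S. a + b \<in> S) \<and> finite (UNIV - S)"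

definition apery :: "nat set \<Rightarrow> int \<Rightarrow> nat set" where
  "apery S x = {s \<in> S. \<not> (\<exists>t\<in>S. int t = int s - x)}"

end

theory Submission
  imports Defs
begin

theorem proposition3p2:
  fixes \<Gamma> :: "nat set" and e' m :: nat
  assumes "numerical_semigroup \<Gamma>"
    and "e' \<in> \<Gamma>" and "e' \<noteq> 0"
    and "m \<in> \<Gamma>"
  shows "apery ({0} \<union> (\<lambda>s. e' + s) ` \<Gamma>) (int (e' + m)) =
           ((\<lambda>s. e' + s) ` apery \<Gamma> (int m))
           \<union> ((\<lambda>s. e' + m + s) ` (apery \<Gamma> (int e') - {0}))
           \<union> {0}"
proof -
  have z: "0 \<in> \<Gamma>" and add: "\<And>a b. a \<in> \<Gamma> \<Longrightarrow> b \<in> \<Gamma> \<Longrightarrow> a + b \<in> \<Gamma>"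
    using assms(1) unfolding numerical_semigroup_def by auto
  let ?G = "{0} \<union> (\<lambda>s. e' + s) ` \<Gamma>"
  have key: "e' + s \<in> apery ?G (int (e' + m)) \<longleftrightarrow>
      (s \<noteq> m \<and> \<not> (\<exists>t\<in>\<Gamma>. int t = int s - int m - int e'))" if s: "s \<in> \<Gamma>" for s
    using s assms(3) by (auto simp: apery_def)
  have L0: "0 \<in> apery ?G (int (e' + m))" using assms(3) by (auto simp: apery_def; linarith)
  show ?thesis
  proof (rule set_eqI)
    fix x
    show "x \<in> apery ?G (int (e' + m)) \<longleftrightarrow> x \<in> ((\<lambda>s. e' + s) ` apery \<Gamma> (int m))
           \<union> ((\<lambda>s. e' + m + s) ` (apery \<Gamma> (int e') - {0})) \<union> {0}"
    proof
      assume x: "x \<in> apery ?G (int (e' + m))"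
      show "x \<in> ((\<lambda>s. e' + s) ` apery \<Gamma> (int m))
           \<union> ((\<lambda>s. e' + m + s) ` (apery \<Gamma> (int e') - {0})) \<union> {0}"
      proof (cases "x = 0")
        case False
        then obtain s where s: "s \<in> \<Gamma>" "x = e' + s" using x by (auto simp: apery_def)
        with x key have k: "s \<noteq> m" "\<not> (\<exists>t\<in>\<Gamma>. int t = int s - int m - int e')" by auto
        show ?thesis
        proof (cases "\<exists>t\<in>\<Gamma>. int t = int s - int m")
          case False
          then have "s \<in> apery \<Gamma> (int m)" using s by (auto simp: apery_def)
          then show ?thesis using s by auto
        next
          case True
          then obtain t where t: "t \<in> \<Gamma>" "int t = int s - int m" by auto
          have "t \<in> apery \<Gamma> (int e') - {0}" using t k by (auto simp: apery_def)
          moreover have "x = e' + m + t" using t s by linarith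
          ultimately show ?thesis by blast
        qed
      qed simp
    next
      assume x: "x \<in> ((\<lambda>s. e' + s) ` apery \<Gamma> (int m))
           \<union> ((\<lambda>s. e' + m + s) ` (apery \<Gamma> (int e') - {0})) \<union> {0}"
      show "x \<in> apery ?G (int (e' + m))"
      proof (cases "x = 0")
        case True then show ?thesis using L0 by simp
      next
        case False
        show ?thesis
        proof (cases "x \<in> (\<lambda>s. e' + s) ` apery \<Gamma> (int m)")
          case True
          then obtain s where s: "s \<in> \<Gamma>" "x = e' + s" "\<not> (\<exists>t\<in>\<Gamma>. int t = int s - int m)"
            by (auto simp: apery_def)
          have "s \<noteq> m" using s z by force
          moreover have "\<not> (\<exists>t\<in>\<Gamma>. int t = int s - int m - int e')"
          proof
            assume "\<exists>t\<in>\<Gamma>. int t = int s - int m - int e'"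
            then obtain t where "t \<in> \<Gamma>" "int t = int s - int m - int e'" by auto
            then have "t + e' \<in> \<Gamma>" "int (t + e') = int s - int m" using add assms(2) by auto
            then show False using s by blast
          qed
          ultimately show ?thesis using key s by simp
        next
          case False
          with x \<open>x \<noteq> 0\<close> obtain t where t: "t \<in> \<Gamma>" "t \<noteq> 0" "x = e' + (m + t)"
            "\<not> (\<exists>u\<in>\<Gamma>. int u = int t - int e')"
            by (auto simp: apery_def add.assoc)
          have mt: "m + t \<in> \<Gamma>" using add assms(4) t by auto
          have "m + t \<noteq> m" using t by simp
          moreover have "\<not> (\<exists>u\<in>\<Gamma>. int u = int (m + t) - int m - int e')" using t by auto
          ultimately show ?thesis using key[OF mt] t by simp
        qed
      qed
    qed
  qed
qed

end
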